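(* Let $Q:(-\infty,-1)\to(-\infty,0)$ be the inverse of the strictly increasing function $G\mapsto G-e^G$ on $(-\infty,0)$, and define $R:\mathbb{R}\to\mathbb{R}$ by $R(V)=-2(1-e^{Q(V)})^2$ for $V<-1$ and $R(V)=4(V+1)$ for $V\ge -1$. For each $m<-1$ let $n(m)>0$ be the unique number such that the solution of the initial value problem $V''-3V'=R(V)$, $V(0)=m$, $V'(0)=-n(m)$ (prime denoting $d/ds$) is negative-valued and solves the two-point boundary value problem $V''-3V'=R(V)$ on $(-\infty,\infty)$, $V(-\infty)=-1$, $V(\infty)=-\infty$. Then the correct shooting slope $-n(m)<0$ depends on $m$ continuously and monotonically, so that $n(m_1)>n(m_2)>0$ whenever $m_1<m_2<-1$.
   Context: Existence and uniqueness of $n(m)$ for each $m<-1$ is established in the paper; the claim concerns the resulting function $m\mapsto n(m)$ on $(-\infty,-1)$. *)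

theory Defs
  imports "HOL-Analysis.Analysis"
begin

definition Q :: "real \<Rightarrow> real" where
  "Q = the_inv_into {..<0} (\<lambda>G. G - exp G)"

definition R :: "real \<Rightarrow> real" where
  "R V = (if V < -1 then - 2 * (1 - exp (Q V))^2 else 4 * (V + 1))"

definition good_slope :: "real \<Rightarrow> real \<Rightarrow> bool" where
  "good_slope m n \<longleftrightarrow> n > 0 \<and>
     (\<exists>V V' :: real \<Rightarrow> real.
        (\<forall>s. (V has_real_derivative V' s) (at s)) \<and>
        (\<forall>s. (V' has_real_derivative (3 * V' s + R (V s))) (at s)) \<and>
        V 0 = m \<and> V' 0 = - n \<and>
        (\<forall>s. V s < 0) \<and>
        (V \<longlongrightarrow> -1) at_bot \<and>
        filterlim V at_bot at_top)"

definition nfun :: "real \<Rightarrow> real" where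
  "nfun m = (THE n. good_slope m n)"

end

theory Submission
  imports Defs
begin

lemma R_nonpos: "x < -1 \<Longrightarrow> R x \<le> 0"
  unfolding R_def by simp

lemma lim_shift_top: "filterlim (\<lambda>s::real. s + t) at_top at_top"
  unfolding filterlim_at_top
proof
  fix Z :: real
  show "eventually (\<lambda>s. Z \<le> s + t) at_top"
    by (rule eventually_mono[OF eventually_ge_at_top[of "Z - t"]]) simp
qed

lemma lim_shift_bot: "filterlim (\<lambda>s::real. s + t) at_bot at_bot"
  unfolding filterlim_at_bot
proof
  fix Z :: real
  show "eventually (\<lambda>s. s + t \<le> Z) at_bot"
    by (rule eventually_mono[OF eventually_le_at_bot[of "Z - t"]]) simp
qed

lemma shift_good:
  assumes dV: "\<forall>s. (V has_real_derivative V' s) (at s)"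
    and dV': "\<forall>s. (V' has_real_derivative (3 * V' s + R (V s))) (at s)"
    and neg: "\<forall>s. V s < 0"
    and l1: "(V \<longlongrightarrow> -1) at_bot"
    and l2: "filterlim V at_bot at_top"
    and vt: "V' t < 0"
  shows "good_slope (V t) (- V' t)"
proof -
  have a: "\<forall>s. ((\<lambda>s. V (s + t)) has_real_derivative V' (s + t)) (at s)"
    using dV by (auto simp: DERIV_shift[symmetric])
  have b: "\<forall>s. ((\<lambda>s. V' (s + t)) has_real_derivative 3 * V' (s + t) + R (V (s + t))) (at s)"
    using dV' by (auto simp: DERIV_shift[symmetric])
  have c: "((\<lambda>s. V (s + t)) \<longlongrightarrow> -1) at_bot"
    using filterlim_compose[OF l1 lim_shift_bot] .
  have d: "filterlim (\<lambda>s. V (s + t)) at_bot at_top"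
    using filterlim_compose[OF l2 lim_shift_top] .
  show ?thesis unfolding good_slope_def
    apply (rule conjI)
    using vt apply simp
    apply (rule exI[of _ "\<lambda>s. V (s + t)"], rule exI[of _ "\<lambda>s. V' (s + t)"])
    using a b c d neg by simp
qed

lemma nfun_eq:
  assumes u: "\<forall>m < -1. \<exists>!n. good_slope m n" and m: "m < -1" and g: "good_slope m n"
  shows "nfun m = n"
  unfolding nfun_def using u m g by (metis the1_equality)

lemma nfun_good:
  assumes u: "\<forall>m < -1. \<exists>!n. good_slope m n" and m: "m < -1"
  shows "good_slope m (nfun m)"
  unfolding nfun_def using u m by (metis theI')

lemma decr:
  fixes V V' :: "real \<Rightarrow> real"
  assumes dV: "\<forall>s. (V has_real_derivative V' s) (at s)"
    and dV': "\<forall>s. (V' has_real_derivative (3 * V' s + R (V s))) (at s)"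
    and v0: "V 0 < -1" and v0': "V' 0 < 0" and s: "s > 0"
  shows "V' s < V' 0"
proof (rule ccontr)
  assume "\<not> V' s < V' 0"
  hence sc: "V' 0 \<le> V' s" by simp
  define c where "c = V' 0"
  have contV': "\<And>x. isCont V' x" using dV' DERIV_isCont by blast
  have contV: "\<And>x. isCont V x" using dV DERIV_isCont by blast
  have "3 * V' 0 + R (V 0) < 0" using R_nonpos[OF v0] v0' by simp
  then obtain d where d: "d > 0" and dd: "\<forall>h>0. h < d \<longrightarrow> V' (0 + h) < V' 0"
    using DERIV_neg_dec_right[OF dV'[rule_format, of 0]] by blast
  have sd: "s \<ge> d"
  proof (rule ccontr)
    assume "\<not> s \<ge> d" thus False using dd s sc by force
  qed
  define a where "a = d / 2"
  have a: "0 < a" "a < d" "a < s" using d sd by (auto simp: a_def)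
  have Va: "V' a < c" using dd a by (auto simp: c_def)
  define T where "T = {x. a \<le> x \<and> x \<le> s \<and> V' x = c}"
  have "\<exists>x. a \<le> x \<and> x \<le> s \<and> V' x = c"
    using IVT[of V' a c s] Va sc a contV' by (auto simp: c_def)
  hence Tne: "T \<noteq> {}" by (auto simp: T_def)
  have Tb: "bdd_below T" unfolding T_def by (rule bdd_belowI[of _ a]) auto
  have Tc: "closed T" unfolding T_def
    by (intro closed_Collect_conj closed_Collect_le closed_Collect_eq continuous_intros
        continuous_at_imp_continuous_on ballI contV')
  define u where "u = Inf T"
  have uT: "u \<in> T" using closed_contains_Inf[OF Tne Tb Tc] by (simp add: u_def)
  have ule: "\<And>x. x \<in> T \<Longrightarrow> u \<le> x" unfolding u_def using Tb by (simp add: cInf_lower)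
  have below: "\<And>x. 0 < x \<Longrightarrow> x < u \<Longrightarrow> V' x < c"
  proof -
    fix x assume x: "0 < x" "x < u"
    show "V' x < c"
    proof (cases "x < d")
      case True thus ?thesis using dd x by (auto simp: c_def)
    next
      case False
      show ?thesis
      proof (rule ccontr)
        assume "\<not> V' x < c"
        hence "c \<le> V' x" by simp
        then obtain y where y: "a \<le> y" "y \<le> x" "V' y = c"
          using IVT[of V' a c x] Va False a contV' by auto
        have "y \<in> T" using y x uT by (auto simp: T_def)
        hence "u \<le> y" by (rule ule)
        thus False using y x by simp
      qed
    qed
  qed
  have u: "0 < u" "V' u = c" using uT a by (auto simp: T_def)
  obtain z where z: "0 < z" "z < u" "V u - V 0 = (u - 0) * V' z"
    using MVT2[of 0 u V V'] u dV by auto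
  have "V' z < 0" using below[OF z(1,2)] v0' by (simp add: c_def)
  hence "(u - 0) * V' z < 0" using u by (simp add: mult_pos_neg)
  hence Vu: "V u < -1" using z v0 by simp
  have "3 * V' u + R (V u) < 0" using R_nonpos[OF Vu] u v0' by (simp add: c_def)
  then obtain d' where d': "d' > 0" and dd': "\<forall>h>0. h < d' \<longrightarrow> V' u < V' (u - h)"
    using DERIV_neg_dec_left[OF dV'[rule_format, of u]] by blast
  define h where "h = min (d'/2) (u/2)"
  have h: "0 < h" "h < d'" "h < u" using d' u by (auto simp: h_def)
  have "V' u < V' (u - h)" using dd' h by blast
  moreover have "V' (u - h) < c" using below[of "u - h"] h by simp
  ultimately show False using u by simp
qed

theorem lemma4p7:
  assumes "\<forall>m < -1. \<exists>!n. good_slope m n"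
  shows "continuous_on {..< -1} nfun \<and>
         (\<forall>m1 m2. m1 < m2 \<and> m2 < -1 \<longrightarrow> nfun m1 > nfun m2 \<and> nfun m2 > 0)"
proof
  note u = assms
  show "\<forall>m1 m2. m1 < m2 \<and> m2 < -1 \<longrightarrow> nfun m1 > nfun m2 \<and> nfun m2 > 0"
  proof (intro allI impI)
    fix m1 m2 :: real assume m: "m1 < m2 \<and> m2 < -1"
    have g: "good_slope m2 (nfun m2)" using nfun_good[OF u] m by simp
    then obtain V V' where dV: "\<forall>s. (V has_real_derivative V' s) (at s)"
      and dV': "\<forall>s. (V' has_real_derivative (3 * V' s + R (V s))) (at s)"
      and v0: "V 0 = m2" and v0': "V' 0 = - nfun m2" and neg: "\<forall>s. V s < 0"
      and l1: "(V \<longlongrightarrow> -1) at_bot" and l2: "filterlim V at_bot at_top"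
      and npos: "nfun m2 > 0"
      unfolding good_slope_def by blast
    have contV: "\<And>x. isCont V x" using dV DERIV_isCont by blast
    have "eventually (\<lambda>s. V s \<le> m1) at_top" using l2 by (simp add: filterlim_at_bot)
    then obtain T where T: "\<And>s. s \<ge> T \<Longrightarrow> V s \<le> m1" by (auto simp: eventually_at_top_linorder)
    define T' where "T' = max T 1"
    have "V T' \<le> m1" "T' \<ge> 0" using T[of T'] by (auto simp: T'_def)
    then obtain t where t: "0 \<le> t" "t \<le> T'" "V t = m1"
      using IVT2[of V T' m1 0] m v0 contV by auto
    have tpos: "t > 0" using t m v0 by (cases "t = 0") auto
    have lt: "V' t < V' 0" using decr[OF dV dV' _ _ tpos] m v0 v0' npos by simp
    have "good_slope (V t) (- V' t)"
      by (rule shift_good[OF dV dV' neg l1 l2]) (use lt v0' npos in simp)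
    hence "nfun m1 = - V' t" using nfun_eq[OF u] t m by simp
    thus "nfun m1 > nfun m2 \<and> nfun m2 > 0" using lt v0' npos by simp
  qed
next
  note u = assms
  show "continuous_on {..< -1} nfun"
  proof (intro continuous_at_imp_continuous_on ballI)
    fix m0 :: real assume "m0 \<in> {..< -1}"
    hence m0: "m0 < -1" by simp
    have g: "good_slope m0 (nfun m0)" using nfun_good[OF u m0] .
    then obtain V V' where dV: "\<forall>s. (V has_real_derivative V' s) (at s)"
      and dV': "\<forall>s. (V' has_real_derivative (3 * V' s + R (V s))) (at s)"
      and v0: "V 0 = m0" and v0': "V' 0 = - nfun m0" and neg: "\<forall>s. V s < 0"
      and l1: "(V \<longlongrightarrow> -1) at_bot" and l2: "filterlim V at_bot at_top"
      and npos: "nfun m0 > 0"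
      unfolding good_slope_def by blast
    have contV: "\<And>x. isCont V x" using dV DERIV_isCont by blast
    have contV': "\<And>x. isCont V' x" using dV' DERIV_isCont by blast
    have e1: "eventually (\<lambda>t. V t < -1) (nhds 0)"
      using order_tendstoD(2)[OF contV[of 0, unfolded isCont_def tendsto_at_iff_tendsto_nhds]] m0 v0 by simp
    have e2: "eventually (\<lambda>t. V' t < 0) (nhds 0)"
      using order_tendstoD(2)[OF contV'[of 0, unfolded isCont_def tendsto_at_iff_tendsto_nhds]] npos v0' by simp
    obtain d0 where d0: "d0 > 0" and dd0: "\<And>t. dist t 0 < d0 \<Longrightarrow> V t < -1 \<and> V' t < 0"
      using eventually_conj[OF e1 e2] unfolding eventually_nhds_metric by blast
    define d where "d = d0 / 2"
    have d: "d > 0" "d < d0" using d0 by (auto simp: d_def)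
    have good: "\<And>z. \<bar>z\<bar> \<le> d \<Longrightarrow> nfun (V z) = - V' z"
    proof -
      fix z :: real assume "\<bar>z\<bar> \<le> d"
      hence "V z < -1" "V' z < 0" using dd0[of z] d by auto
      thus "nfun (V z) = - V' z"
        using nfun_eq[OF u _ shift_good[OF dV dV' neg l1 l2]] by simp
    qed
    have mono: "\<And>x y. \<bar>x\<bar> \<le> d \<Longrightarrow> \<bar>y\<bar> \<le> d \<Longrightarrow> x < y \<Longrightarrow> V y < V x"
    proof -
      fix x y :: real assume xy: "\<bar>x\<bar> \<le> d" "\<bar>y\<bar> \<le> d" "x < y"
      obtain z where z: "x < z" "z < y" "V y - V x = (y - x) * V' z"
        using MVT2[of x y V V'] xy dV by auto
      have "V' z < 0" using dd0[of z] z xy d by auto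
      hence "(y - x) * V' z < 0" using xy by (simp add: mult_pos_neg)
      thus "V y < V x" using z by simp
    qed
    have inj: "inj_on V {-d..d}"
      by (rule inj_onI) (metis atLeastAtMost_iff abs_le_iff linorder_neqE_linordered_idom mono less_irrefl minus_le_iff)
    define g where "g = the_inv_into {-d..d} V"
    have gV: "\<And>z. \<bar>z - 0\<bar> \<le> d \<Longrightarrow> g (V z) = z"
      unfolding g_def by (rule the_inv_into_f_f[OF inj]) auto
    have cg: "isCont g (V 0)"
      by (rule isCont_inverse_function[OF d(1) gV contV])
    have ev: "eventually (\<lambda>y. nfun y = - V' (g y)) (nhds m0)"
    proof -
      have o: "V d < m0" "m0 < V (-d)" using mono[of 0 d] mono[of "-d" 0] d v0 by auto
      have "eventually (\<lambda>y. y \<in> {V d <..< V (-d)}) (nhds m0)"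
        by (rule eventually_nhds_in_open) (use o in auto)
      thus ?thesis
      proof (rule eventually_mono)
        fix y assume "y \<in> {V d <..< V (-d)}"
        hence y: "V d \<le> y" "y \<le> V (-d)" by auto
        obtain z where z: "-d \<le> z" "z \<le> d" "V z = y"
          using IVT2[of V d y "-d"] y d contV by auto
        have "\<bar>z\<bar> \<le> d" using z by auto
        thus "nfun y = - V' (g y)" using good gV z by auto
      qed
    qed
    have "isCont (\<lambda>y. - V' (g y)) m0"
      by (intro continuous_intros isCont_o2[OF cg[unfolded v0]]) (use contV' in auto)
    thus "isCont nfun m0" using isCont_cong[OF ev] by simp
  qed
qed

end
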